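(* Let $0\le q<\tfrac12$ and $p=1-q$. Let $X_1,X_2,\dots$ be i.i.d. letters in $\{S,H\}$ with $\mathbb{P}[X_i=S]=q$ and $\mathbb{P}[X_i=H]=p$. Define the selfish-mining attack cycle and the random variable $L$ as follows: (i) if $X_1=H$, the cycle is $H$ and $L=1$; (ii) if $X_1X_2=SH$, the cycle is $X_1X_2X_3$ (with $X_3\in\{S,H\}$ arbitrary) and $L=2$; (iii) if $X_1X_2=SS$, the cycle is $X_1\cdots X_m$, where $m\ge 3$ is the first index with $X_m=H$ and (number of $S$ among $X_1,\dots,X_m$) $-$ (number of $H$ among $X_1,\dots,X_m$) $=1$; in this case $L$ is the number of letters $S$ in the cycle. Then $\mathbb{P}[L=1]=p$, $\mathbb{P}[L=2]=pq+pq^2$, and for every $n\ge 3$, $$\mathbb{P}[L=n]=pq^2(pq)^{n-2}C_{n-2},$$ where $C_k=\frac{(2k)!}{k!\,(k+1)!}$ is the $k$-th Catalan number.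
   Context: This models the Selfish Mining strategy in Bitcoin: each newly validated block is found by the selfish miner (letter $S$, relative hashrate $q$) or by the honest miners (letter $H$, relative hashrate $p$), independently. $L$ is the number of blocks added to the official blockchain during one attack cycle. For example, the cycle $SSSHSHH$ has $L=4$, and the cycle $SSH$ has $L=2$. *)

theory Defs
  imports "HOL-Probability.Probability"
begin

text \<open>Letters: True = S (selfish miner), False = H (honest miners).
  The stream index i (0-based) holds the letter X_(i+1).\<close>

definition sm_space :: "real \<Rightarrow> bool stream measure" where
  "sm_space q = stream_space (measure_pmf (bernoulli_pmf q))"

definition numS :: "nat \<Rightarrow> bool stream \<Rightarrow> nat" where
  "numS m \<omega> = length (filter (\<lambda>x. x) (stake m \<omega>))"

definition numH :: "nat \<Rightarrow> bool stream \<Rightarrow> nat" where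
  "numH m \<omega> = length (filter (\<lambda>x. \<not> x) (stake m \<omega>))"

definition cycle_end :: "bool stream \<Rightarrow> nat \<Rightarrow> bool" where
  "cycle_end \<omega> m \<longleftrightarrow> 3 \<le> m \<and> \<not> \<omega> !! (m - 1) \<and> int (numS m \<omega>) - int (numH m \<omega>) = 1"

text \<open>L; set to 0 on the (null) event that case (iii) never terminates.\<close>
definition cycleL :: "bool stream \<Rightarrow> nat" where
  "cycleL \<omega> =
     (if \<not> \<omega> !! 0 then 1
      else if \<not> \<omega> !! 1 then 2
      else if (\<exists>m. cycle_end \<omega> m) then numS (LEAST m. cycle_end \<omega> m) \<omega>
      else 0)"

definition catalan :: "nat \<Rightarrow> real" where
  "catalan k = fact (2 * k) / (fact k * fact (k + 1))"

end

theory Submission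
  imports Defs
begin

fun hitL :: "nat \<Rightarrow> bool list \<Rightarrow> bool" where
  "hitL h [] = (h = 0)"
| "hitL h (x # xs) = (h \<noteq> 0 \<and> hitL (if x then Suc h else h - 1) xs)"

lemma sets_sm: "sets (sm_space q) = sets (stream_space (count_space UNIV))"
  unfolding sm_space_def by (rule sets_stream_space_cong) simp

lemma space_sm: "space (sm_space q) = UNIV"
  unfolding sm_space_def by (simp add: space_stream_space)

lemma meas1: "{\<omega> \<in> space (sm_space q). \<omega> !! 0 \<and> ((\<not> \<omega> !! 1 \<and> b) \<or> (\<omega> !! 1 \<and> hitL 1 (stake l (sdrop 2 \<omega>))))} \<in> sets (sm_space q)"
  unfolding sets_sm space_sm[of q, symmetric] sm_space_def
  by measurable

lemma meas2: "{\<omega> \<in> space (sm_space q). hitL h (stake l \<omega>)} \<in> sets (sm_space q)"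
  unfolding sets_sm space_sm[of q, symmetric] sm_space_def
  by measurable

lemma step:
  assumes "0 \<le> q" "q \<le> 1" "{\<omega> \<in> space (sm_space q). P \<omega>} \<in> sets (sm_space q)"
  shows "measure (sm_space q) {\<omega> \<in> space (sm_space q). P \<omega>} =
     q * measure (sm_space q) {\<omega> \<in> space (sm_space q). P (True ## \<omega>)} +
     (1 - q) * measure (sm_space q) {\<omega> \<in> space (sm_space q). P (False ## \<omega>)}"
proof -

  interpret S: prob_space "sm_space q" unfolding sm_space_def by (rule prob_space.prob_space_stream_space[OF prob_space_measure_pmf])
  have "ennreal (measure (sm_space q) {\<omega> \<in> space (sm_space q). P \<omega>}) =
     (\<integral>\<^sup>+t. ennreal (measure (sm_space q) {\<omega> \<in> space (sm_space q). P (t ## \<omega>)}) \<partial>measure_pmf (bernoulli_pmf q))"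
    using prob_space.prob_stream_space[OF prob_space_measure_pmf, of _ P] assms(3) unfolding sm_space_def by simp
  also have "\<dots> = ennreal (q * measure (sm_space q) {\<omega> \<in> space (sm_space q). P (True ## \<omega>)} +
     (1 - q) * measure (sm_space q) {\<omega> \<in> space (sm_space q). P (False ## \<omega>)})"
    using assms(1,2) by (simp add: ennreal_mult[symmetric] ennreal_plus[symmetric] del: ennreal_plus)
  finally show ?thesis by (subst (asm) ennreal_inj) (use assms(1,2) in auto)
qed


definition G :: "real \<Rightarrow> nat \<Rightarrow> nat \<Rightarrow> real" where
  "G q h u = (if h = 0 then (if u = 0 then 1 else 0) else
     real h * fact (h + 2 * u - 1) / (fact u * fact (u + h)) * q ^ u * (1 - q) ^ (u + h))"

lemma alg:
  fixes a b X Y Z q p Q P D E :: real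
  assumes "a \<ge> 0" "b \<ge> 0" "Y > 0" "Z > 0" "D = b + a + 2" "E = b + 1"
  shows "(a+1)*((a+2*b+2)*X)/((E*Y)*(D*Z)) * (q*Q) * (p*P) =
    q*((a+2)*X/(Y*(D*Z)) * Q * (p*P)) + p*(a*X/((E*Y)*Z) * (q*Q) * P)"
proof -
  have nz: "E \<noteq> 0" "D \<noteq> 0" "Y \<noteq> 0" "Z \<noteq> 0" using assms by auto
  have k: "(a+1)*(a+2*b+2) = (a+2)*E + a*D" using assms by (simp add: algebra_simps)
  have "(a+1)*((a+2*b+2)*X)/((E*Y)*(D*Z)) * (q*Q) * (p*P) =
     ((a+1)*(a+2*b+2)) * X*q*Q*p*P/(E*D*Y*Z)"
    using nz by (simp add: field_simps)
  also have "\<dots> = ((a+2)*E + a*D) * X*q*Q*p*P/(E*D*Y*Z)" by (simp only: k)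
  also have "\<dots> = q*((a+2)*X/(Y*(D*Z)) * Q * (p*P)) + p*(a*X/((E*Y)*Z) * (q*Q) * P)"
    using nz by (simp add: field_simps)
  finally show ?thesis .
qed

lemma G_rec: "G q (Suc h) u = (if u = 0 then 0 else q * G q (h + 2) (u - 1)) + (1 - q) * G q h u"
proof (cases u)
  case 0
  have G0: "G q (Suc k) 0 = (1 - q) ^ Suc k" for k
  proof -
    have "real (Suc k) * fact k = (fact (Suc k) :: real)" by (simp add: fact_Suc)
    moreover have "(fact (Suc k) :: real) > 0" by simp
    ultimately show ?thesis by (simp add: G_def del: fact_Suc)
  qed
  show ?thesis using 0 by (cases h) (simp_all add: G0 G_def)
next
  case (Suc v)
  define X where "X = (fact (h + 2 * v + 1) :: real)"
  define Y where "Y = (fact v :: real)"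
  define Z where "Z = (fact (v + h + 1) :: real)"
  have f1: "fact (Suc h + 2 * Suc v - 1) = (real h + 2 * real v + 2) * X"
    unfolding X_def by (simp add: fact_Suc algebra_simps)
  have f2: "fact (Suc v) = (real v + 1) * Y" unfolding Y_def by (simp add: fact_Suc algebra_simps)
  have f3: "fact (Suc v + Suc h) = (real v + real h + 2) * Z" unfolding Z_def
    by (simp add: fact_Suc algebra_simps)
  have f4: "fact (h + 2 + 2 * v - 1) = X" unfolding X_def by (simp add: algebra_simps)
  have f5: "fact (v + (h + 2)) = (real v + real h + 2) * Z" unfolding Z_def
    by (simp add: fact_Suc algebra_simps)
  have f6: "fact (h + 2 * Suc v - 1) = X" unfolding X_def by (simp add: algebra_simps)
  have f7: "fact (Suc v + h) = Z" unfolding Z_def by (simp add: algebra_simps)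
  have Gh: "G q h (Suc v) = real h * X / (((real v + 1) * Y) * Z) * (q * q ^ v) * (1 - q) ^ (v + h + 1)"
  proof (cases "h = 0")
    case False
    then show ?thesis by (simp only: G_def f2 f6 f7 if_False) (simp add: ac_simps)
  qed (simp add: G_def)
  have sh: "Suc h \<noteq> 0" by simp
  have lhs: "G q (Suc h) (Suc v) = (real h + 1) * ((real h + 2 * real v + 2) * X) / (((real v + 1) * Y) * ((real v + real h + 2) * Z)) * (q * q ^ v) * ((1 - q) * (1 - q) ^ (v + h + 1))"
    unfolding G_def if_not_P[OF sh] f1 f2 f3 by (simp add: ac_simps)
  have sh2: "h + 2 \<noteq> 0" by simp
  have mid: "G q (h + 2) v = (real h + 2) * X / (Y * ((real v + real h + 2) * Z)) * q ^ v * ((1 - q) * (1 - q) ^ (v + h + 1))"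
    unfolding G_def if_not_P[OF sh2] f4 f5 Y_def[symmetric] by (simp add: ac_simps)
  have YZ: "Y > 0" "Z > 0" unfolding Y_def Z_def by auto
  have "G q (Suc h) (Suc v) = q * G q (h + 2) v + (1 - q) * G q h (Suc v)"
    unfolding lhs mid Gh
    by (rule alg[where a="real h" and b="real v" and X=X and Y=Y and Z=Z and q=q and p="1 - q" and Q="q ^ v" and P="(1 - q) ^ (v + h + 1)" and D="real v + real h + 2" and E="real v + 1"]) (auto simp: YZ)
  then show ?thesis using Suc by simp
qed


definition F :: "real \<Rightarrow> nat \<Rightarrow> nat \<Rightarrow> real" where
  "F q h l = (if h \<le> l \<and> even (l - h) then G q h ((l - h) div 2) else 0)"

lemma F_rec: "F q (Suc h) (Suc l) = q * F q (h + 2) l + (1 - q) * F q h l"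
proof (cases "h \<le> l \<and> even (l - h)")
  case True
  then obtain u where u: "l = h + 2 * u" by (metis dvd_def le_add_diff_inverse)
  show ?thesis
  proof (cases u)
    case 0
    then show ?thesis using u G_rec[of q h 0] by (simp add: F_def)
  next
    case (Suc v)
    have "l - (h + 2) = 2 * v" using u Suc by simp
    then show ?thesis using u Suc G_rec[of q h u] by (simp add: F_def)
  qed
next
  case False
  then show ?thesis by (auto simp: F_def)
qed

lemma F_0: "F q h 0 = (if h = 0 then 1 else 0)"
  by (simp add: F_def G_def)

lemma F_0S: "F q 0 (Suc l) = 0"
  by (auto simp: F_def G_def)

lemma meas_gen:
  assumes "Measurable.pred (stream_space (count_space UNIV)) P"
  shows "{\<omega> \<in> space (sm_space q). P \<omega>} \<in> sets (sm_space q)"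
  using assms unfolding sets_sm space_sm[of q, symmetric] sm_space_def
  by (simp add: pred_def space_stream_space)

lemma prob_sm: "prob_space (sm_space q)"
  unfolding sm_space_def by (rule prob_space.prob_space_stream_space[OF prob_space_measure_pmf])

lemma measure_const: "measure (sm_space q) {\<omega> \<in> space (sm_space q). b} = (if b then 1 else 0)"
  using prob_space.prob_space[OF prob_sm] by simp

lemma measure_hit:
  assumes "0 \<le> q" "q \<le> 1"
  shows "measure (sm_space q) {\<omega> \<in> space (sm_space q). hitL h (stake l \<omega>)} = F q h l"
proof (induction l arbitrary: h)
  case 0
  then show ?case by (simp add: F_0 measure_const)
next
  case (Suc l)
  have "measure (sm_space q) {\<omega> \<in> space (sm_space q). hitL h (stake (Suc l) \<omega>)} =
     q * measure (sm_space q) {\<omega> \<in> space (sm_space q). hitL h (stake (Suc l) (True ## \<omega>))} +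
     (1 - q) * measure (sm_space q) {\<omega> \<in> space (sm_space q). hitL h (stake (Suc l) (False ## \<omega>))}"
    by (rule step[OF assms meas2])
  also have "\<dots> = F q h (Suc l)"
  proof (cases h)
    case 0
    then show ?thesis by (simp add: F_0S measure_const)
  next
    case (Suc k)
    then show ?thesis using Suc.IH by (simp add: F_rec)
  qed
  finally show ?case .
qed


definition dd :: "bool stream \<Rightarrow> nat \<Rightarrow> int" where
  "dd \<omega> m = int (numS m \<omega>) - int (numH m \<omega>) - 1"

lemma numS_Suc: "numS (Suc m) \<omega> = numS m \<omega> + (if \<omega> !! m then 1 else 0)"
  unfolding numS_def stake_Suc by simp

lemma numH_Suc: "numH (Suc m) \<omega> = numH m \<omega> + (if \<omega> !! m then 0 else 1)"
  unfolding numH_def stake_Suc by simp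

lemma numSH: "numS m \<omega> + numH m \<omega> = m"
  unfolding numS_def numH_def using sum_length_filter_compl[of "\<lambda>x. x" "stake m \<omega>"] by simp

lemma dd_Suc: "dd \<omega> (Suc m) = dd \<omega> m + (if \<omega> !! m then 1 else -1)"
  by (simp add: dd_def numS_Suc numH_Suc)

lemma stake_sdrop_Suc: "stake (Suc l) (sdrop k \<omega>) = \<omega> !! k # stake l (sdrop (Suc k) \<omega>)"
  by (simp add: sdrop_snth)

lemma hit_char:
  "dd \<omega> k = int h \<Longrightarrow> hitL h (stake l (sdrop k \<omega>)) \<longleftrightarrow>
     (dd \<omega> (k + l) = 0 \<and> (\<forall>j. k \<le> j \<and> j < k + l \<longrightarrow> dd \<omega> j > 0))"
proof (induction l arbitrary: h k)
  case 0
  then show ?case by simp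
next
  case (Suc l)
  show ?case
  proof (cases "h = 0")
    case True
    then show ?thesis using Suc.prems by (auto simp: stake_sdrop_Suc)
  next
    case False
    define h' where "h' = (if \<omega> !! k then Suc h else h - 1)"
    have d': "dd \<omega> (Suc k) = int h'" using Suc.prems False by (simp add: dd_Suc h'_def)
    have "hitL h (stake (Suc l) (sdrop k \<omega>)) = hitL h' (stake l (sdrop (Suc k) \<omega>))"
      using False by (simp add: stake_sdrop_Suc h'_def)
    also have "\<dots> \<longleftrightarrow> (dd \<omega> (Suc k + l) = 0 \<and> (\<forall>j. Suc k \<le> j \<and> j < Suc k + l \<longrightarrow> dd \<omega> j > 0))"
      by (rule Suc.IH[OF d'])
    also have "\<dots> \<longleftrightarrow> (dd \<omega> (k + Suc l) = 0 \<and> (\<forall>j. k \<le> j \<and> j < k + Suc l \<longrightarrow> dd \<omega> j > 0))"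
    proof -
      have "dd \<omega> k > 0" using Suc.prems False by simp
      then have "(\<forall>j. Suc k \<le> j \<and> j < Suc k + l \<longrightarrow> dd \<omega> j > 0) \<longleftrightarrow>
          (\<forall>j. k \<le> j \<and> j < k + Suc l \<longrightarrow> dd \<omega> j > 0)"
      proof (intro iffI allI impI)
        fix j assume A: "\<forall>j. Suc k \<le> j \<and> j < Suc k + l \<longrightarrow> dd \<omega> j > 0"
          and B: "k \<le> j \<and> j < k + Suc l"
        show "dd \<omega> j > 0"
        proof (cases "j = k")
          case True then show ?thesis using \<open>dd \<omega> k > 0\<close> by simp
        next
          case False then have "Suc k \<le> j \<and> j < Suc k + l" using B by simp
          then show ?thesis using A by blast
        qed
      next
        fix j assume A: "\<forall>j. k \<le> j \<and> j < k + Suc l \<longrightarrow> dd \<omega> j > 0"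
          and B: "Suc k \<le> j \<and> j < Suc k + l"
        then have "k \<le> j \<and> j < k + Suc l" by simp
        then show "dd \<omega> j > 0" using A by blast
      qed
      then show ?thesis by simp
    qed
    finally show ?thesis .
  qed
qed

lemma cycle_end_dd: "cycle_end \<omega> m \<longleftrightarrow> 3 \<le> m \<and> \<not> \<omega> !! (m - 1) \<and> dd \<omega> m = 0"
  unfolding cycle_end_def dd_def by auto

lemma dd2: "\<omega> !! 0 \<Longrightarrow> \<omega> !! 1 \<Longrightarrow> dd \<omega> 2 = 1"
  by (simp add: dd_def numeral_2_eq_2 numS_Suc numH_Suc numS_def numH_def)

lemma dd_zero_numS: "dd \<omega> m = 0 \<Longrightarrow> 2 * numS m \<omega> = m + 1"
  using numSH[of m \<omega>] unfolding dd_def by linarith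

lemma positivity:
  assumes "dd \<omega> 2 = 1" "\<forall>m. m < m0 \<longrightarrow> \<not> cycle_end \<omega> m"
  shows "2 \<le> j \<Longrightarrow> j < m0 \<Longrightarrow> dd \<omega> j > 0"
proof (induction j)
  case 0
  then show ?case by simp
next
  case (Suc j)
  show ?case
  proof (cases "Suc j = 2")
    case True
    then show ?thesis using assms(1) by (simp add: numeral_2_eq_2)
  next
    case False
    then have j2: "2 \<le> j" using Suc.prems by simp
    then have pos: "dd \<omega> j > 0" using Suc by simp
    show ?thesis
    proof (rule ccontr)
      assume "\<not> dd \<omega> (Suc j) > 0"
      then have "dd \<omega> (Suc j) = 0" "\<not> \<omega> !! j" using pos dd_Suc[of \<omega> j] by (auto split: if_splits)
      then have "cycle_end \<omega> (Suc j)" using j2 by (simp add: cycle_end_dd)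
      then show False using assms(2) Suc.prems by auto
    qed
  qed
qed

lemma link:
  assumes w: "\<omega> !! 0" "\<omega> !! 1" and n: "n \<ge> 2"
  shows "cycleL \<omega> = n \<longleftrightarrow> hitL 1 (stake (2 * n - 3) (sdrop 2 \<omega>))"
proof -
  have d2: "dd \<omega> 2 = 1" using dd2 w by simp
  have H: "hitL 1 (stake l (sdrop 2 \<omega>)) \<longleftrightarrow>
     (dd \<omega> (2 + l) = 0 \<and> (\<forall>j. 2 \<le> j \<and> j < 2 + l \<longrightarrow> dd \<omega> j > 0))" for l
    using hit_char[of \<omega> 2 1 l] d2 by simp
  have cL: "cycleL \<omega> = (if (\<exists>m. cycle_end \<omega> m) then numS (LEAST m. cycle_end \<omega> m) \<omega> else 0)"
    using w by (simp add: cycleL_def)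
  show ?thesis
  proof
    assume c: "cycleL \<omega> = n"
    have ex: "\<exists>m. cycle_end \<omega> m"
    proof (rule ccontr)
      assume "\<not> ?thesis" then show False using c cL n by simp
    qed
    define m0 where "m0 = (LEAST m. cycle_end \<omega> m)"
    have ce: "cycle_end \<omega> m0" using ex unfolding m0_def by (rule LeastI_ex)
    have lt: "\<forall>m. m < m0 \<longrightarrow> \<not> cycle_end \<omega> m" unfolding m0_def using not_less_Least by blast
    have ns: "numS m0 \<omega> = n" using c cL ex m0_def by simp
    have dz: "dd \<omega> m0 = 0" and m3: "3 \<le> m0" using ce by (auto simp: cycle_end_dd)
    have m0e: "m0 = 2 + (2 * n - 3)" using dd_zero_numS[OF dz] ns n by simp
    have "\<forall>j. 2 \<le> j \<and> j < m0 \<longrightarrow> dd \<omega> j > 0" using positivity[OF d2 lt] by blast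
    then show "hitL 1 (stake (2 * n - 3) (sdrop 2 \<omega>))" using H dz m0e by simp
  next
    assume h: "hitL 1 (stake (2 * n - 3) (sdrop 2 \<omega>))"
    define m0 where "m0 = 2 + (2 * n - 3)"
    have dz: "dd \<omega> m0 = 0" and pos: "\<forall>j. 2 \<le> j \<and> j < m0 \<longrightarrow> dd \<omega> j > 0"
      using h H unfolding m0_def by auto
    have m3: "3 \<le> m0" using n unfolding m0_def by simp
    have "dd \<omega> (m0 - 1) > 0" using pos m3 by simp
    moreover have "dd \<omega> m0 = dd \<omega> (m0 - 1) + (if \<omega> !! (m0 - 1) then 1 else -1)"
      using dd_Suc[of \<omega> "m0 - 1"] m3 by (simp add: Suc_diff_1[symmetric])
    ultimately have "\<not> \<omega> !! (m0 - 1)" using dz by (auto split: if_splits)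
    then have ce: "cycle_end \<omega> m0" using dz m3 by (simp add: cycle_end_dd)
    have le: "(LEAST m. cycle_end \<omega> m) = m0"
    proof (rule Least_equality)
      show "cycle_end \<omega> m0" by (rule ce)
      fix y assume "cycle_end \<omega> y"
      then have y3: "3 \<le> y" and y0: "dd \<omega> y = 0" by (auto simp: cycle_end_dd)
      show "m0 \<le> y"
      proof (rule ccontr)
        assume "\<not> m0 \<le> y"
        then have "2 \<le> y \<and> y < m0" using y3 by simp
        then have "dd \<omega> y > 0" using pos by blast
        then show False using y0 by simp
      qed
    qed
    have "2 * numS m0 \<omega> = m0 + 1" by (rule dd_zero_numS[OF dz])
    then have "numS m0 \<omega> = n" using n unfolding m0_def by simp
    then show "cycleL \<omega> = n" using cL ce le by auto
  qed
qed

lemma not1: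
  assumes w: "\<omega> !! 0" "\<omega> !! 1"
  shows "cycleL \<omega> \<noteq> 1"
proof -
  have cL: "cycleL \<omega> = (if (\<exists>m. cycle_end \<omega> m) then numS (LEAST m. cycle_end \<omega> m) \<omega> else 0)"
    using w by (simp add: cycleL_def)
  show ?thesis
  proof (cases "\<exists>m. cycle_end \<omega> m")
    case True
    then have ce: "cycle_end \<omega> (LEAST m. cycle_end \<omega> m)" by (rule LeastI_ex)
    then have "dd \<omega> (LEAST m. cycle_end \<omega> m) = 0" "3 \<le> (LEAST m. cycle_end \<omega> m)"
      by (auto simp: cycle_end_dd)
    then have "numS (LEAST m. cycle_end \<omega> m) \<omega> \<ge> 2" using dd_zero_numS by fastforce
    then show ?thesis using cL True by simp
  qed (use cL in simp)
qed


lemma set1: "{\<omega> \<in> space (sm_space q). cycleL \<omega> = 1} = {\<omega> \<in> space (sm_space q). \<not> \<omega> !! 0}"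
  using not1 by (auto simp: cycleL_def)

lemma setn: "n \<ge> 2 \<Longrightarrow> {\<omega> \<in> space (sm_space q). cycleL \<omega> = n} =
  {\<omega> \<in> space (sm_space q). \<omega> !! 0 \<and> ((\<not> \<omega> !! 1 \<and> n = 2) \<or> (\<omega> !! 1 \<and> hitL 1 (stake (2 * n - 3) (stl (stl \<omega>)))))}"
  using link[of _ n] by (auto simp: cycleL_def numeral_2_eq_2)

lemma measn:
  assumes "0 \<le> q" "q \<le> 1" "n \<ge> 2"
  shows "measure (sm_space q) {\<omega> \<in> space (sm_space q). cycleL \<omega> = n} =
    q * (q * F q 1 (2 * n - 3) + (1 - q) * (if n = 2 then 1 else 0))"
proof -
  have "measure (sm_space q) {\<omega> \<in> space (sm_space q). cycleL \<omega> = n} =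
    measure (sm_space q) {\<omega> \<in> space (sm_space q). \<omega> !! 0 \<and> ((\<not> \<omega> !! 1 \<and> n = 2) \<or> (\<omega> !! 1 \<and> hitL 1 (stake (2 * n - 3) (stl (stl \<omega>)))))}"
    using setn[OF assms(3)] by simp
  also have "\<dots> = q * measure (sm_space q) {\<omega> \<in> space (sm_space q). (\<not> \<omega> !! 0 \<and> n = 2) \<or> (\<omega> !! 0 \<and> hitL 1 (stake (2 * n - 3) (stl \<omega>)))}
     + (1 - q) * measure (sm_space q) {\<omega> \<in> space (sm_space q). False}"
    by (subst step) (use assms in \<open>auto intro!: meas_gen\<close>)
  also have "\<dots> = q * measure (sm_space q) {\<omega> \<in> space (sm_space q). (\<not> \<omega> !! 0 \<and> n = 2) \<or> (\<omega> !! 0 \<and> hitL 1 (stake (2 * n - 3) (stl \<omega>)))}"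
    by (simp add: measure_const)
  also have "measure (sm_space q) {\<omega> \<in> space (sm_space q). (\<not> \<omega> !! 0 \<and> n = 2) \<or> (\<omega> !! 0 \<and> hitL 1 (stake (2 * n - 3) (stl \<omega>)))} =
     q * measure (sm_space q) {\<omega> \<in> space (sm_space q). hitL 1 (stake (2 * n - 3) \<omega>)} + (1 - q) * measure (sm_space q) {\<omega> \<in> space (sm_space q). n = 2}"
    by (subst step) (use assms in \<open>auto intro!: meas_gen\<close>)
  finally show ?thesis using measure_hit[OF assms(1,2)] by (simp add: measure_const)
qed


theorem mainTheorem1:
  fixes q p :: real
  assumes "0 \<le> q" "q < 1 / 2" "p = 1 - q"
  shows "measure (sm_space q) {\<omega> \<in> space (sm_space q). cycleL \<omega> = 1} = p \<and>
      measure (sm_space q) {\<omega> \<in> space (sm_space q). cycleL \<omega> = 2} = p * q + p * q ^ 2 \<and>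
      (\<forall>n::nat. n \<ge> 3 \<longrightarrow>
           measure (sm_space q) {\<omega> \<in> space (sm_space q). cycleL \<omega> = n}
             = p * q ^ 2 * (p * q) ^ (n - 2) * catalan (n - 2))"
proof (intro conjI allI impI)
  have q1: "q \<le> 1" using assms by simp
  show "measure (sm_space q) {\<omega> \<in> space (sm_space q). cycleL \<omega> = 1} = p"
    unfolding set1 using assms q1
    by (subst step) (auto intro!: meas_gen simp: measure_const prob_space.prob_space[OF prob_sm])
  have "measure (sm_space q) {\<omega> \<in> space (sm_space q). cycleL \<omega> = 2} = q * (q * F q 1 1 + (1 - q))"
    using measn[OF assms(1) q1, of 2] by simp
  also have "F q 1 1 = 1 - q" by (simp add: F_def G_def)
  finally have X: "measure (sm_space q) {\<omega> \<in> space (sm_space q). cycleL \<omega> = 2} = q * (q * (1 - q) + (1 - q))" .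
  have "q * (q * (1 - q) + (1 - q)) = p * q + p * q ^ 2"
    unfolding assms(3) by (simp add: algebra_simps power2_eq_square)
  then show "measure (sm_space q) {\<omega> \<in> space (sm_space q). cycleL \<omega> = 2} = p * q + p * q ^ 2"
    using X by simp
next
  fix n :: nat assume n: "3 \<le> n"
  define k where "k = n - 2"
  have nk: "2 * n - 3 = 1 + 2 * k" "n - 2 = k" using n unfolding k_def by auto
  have "measure (sm_space q) {\<omega> \<in> space (sm_space q). cycleL \<omega> = n} = q * (q * F q 1 (1 + 2 * k))"
    using measn[OF assms(1) _ , of n] n assms nk by simp
  also have "F q 1 (1 + 2 * k) = fact (2 * k) / (fact k * fact (k + 1)) * q ^ k * (1 - q) ^ (k + 1)"
    by (simp add: F_def G_def ac_simps)
  finally show "measure (sm_space q) {\<omega> \<in> space (sm_space q). cycleL \<omega> = n} = p * q ^ 2 * (p * q) ^ (n - 2) * catalan (n - 2)"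
    unfolding nk catalan_def using assms(3) by (simp add: power_mult_distrib power2_eq_square ac_simps)
qed

end
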